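(* Let $k=\mathbb{R}$ or $k=\mathbb{C}$, let $\mathcal Z\subset k$ be a discrete subring closed under conjugation, $(a_n)_{n\ge1}$ a sequence in $\mathcal Z$ and $x_0\in k$ with $x_n=T_{a_n}\cdots T_{a_1}x_0$ defined and $|x_n|<1$ for all $n\ge0$. Then for each $n$ there exist $p_n,q_n\in\mathcal Z$ with $|q_n|\ge1$ such that $p_n/q_n=T^{-1}_{a_1}\cdots T^{-1}_{a_n}0$ and \[\left|T^{-1}_{a_1}\cdots T^{-1}_{a_n}0-x_0\right|=\frac{1}{|q_n|}\prod_{i=0}^n|x_i|.\]
   Context: For $a\in\mathcal Z$, $T_ax=x^{-1}-a$ and $T_a^{-1}x=(x+a)^{-1}$. Discrete means discrete in the Euclidean topology. *)

theory Defs
  imports "HOL-Analysis.Analysis"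
begin

definition complex_subring :: "complex set \<Rightarrow> bool" where
  "complex_subring Z \<longleftrightarrow> 0 \<in> Z \<and> 1 \<in> Z \<and>
     (\<forall>x\<in>Z. \<forall>y\<in>Z. x + y \<in> Z \<and> x * y \<in> Z) \<and> (\<forall>x\<in>Z. - x \<in> Z)"

definition T :: "complex \<Rightarrow> complex \<Rightarrow> complex" where
  "T a x = inverse x - a"

definition Tinv :: "complex \<Rightarrow> complex \<Rightarrow> complex" where
  "Tinv a x = inverse (x + a)"

text \<open>orbit a x0 n = T_{a_n} ... T_{a_1} x0 (the sequence a is indexed from 1).\<close>
fun orbit :: "(nat \<Rightarrow> complex) \<Rightarrow> complex \<Rightarrow> nat \<Rightarrow> complex" where
  "orbit a x0 0 = x0"
| "orbit a x0 (Suc n) = T (a (Suc n)) (orbit a x0 n)"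

fun Tinv_comp :: "(nat \<Rightarrow> complex) \<Rightarrow> nat \<Rightarrow> complex \<Rightarrow> complex" where
  "Tinv_comp a 0 = id"
| "Tinv_comp a (Suc n) = Tinv_comp a n \<circ> Tinv (a (Suc n))"

end

theory Submission
  imports Defs
begin

lemma Z_pow:
  assumes ring: "complex_subring Z" and z: "z \<in> Z"
  shows "z ^ n \<in> Z"
  using z ring by (induction n) (auto simp: complex_subring_def)

lemma Z_norm:
  assumes ring: "complex_subring Z" and disc: "discrete Z" and z: "z \<in> Z" and nz: "z \<noteq> 0"
  shows "norm z \<ge> 1"
proof (rule ccontr)
  assume "\<not> norm z \<ge> 1"
  hence lt: "norm z < 1" by simp
  have "0 \<in> Z" using ring by (simp add: complex_subring_def)
  hence "0 isolated_in Z" by (rule discreteD[OF disc])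
  then obtain d where d: "d > 0" "\<And>y. y \<in> Z \<Longrightarrow> dist 0 y < d \<Longrightarrow> y = 0"
    by (metis isolated_inE_dist)
  obtain n where n: "norm z ^ n < d" using real_arch_pow_inv[OF d(1) lt] by blast
  have "z ^ n \<in> Z" by (rule Z_pow[OF ring z])
  moreover have "dist 0 (z ^ n) < d" using n by (simp add: norm_power)
  ultimately have "z ^ n = 0" using d(2) by blast
  thus False using nz by simp
qed

lemma Tinv_comp_front:
  "Tinv_comp a (Suc n) y = Tinv (a 1) (Tinv_comp (\<lambda>k. a (Suc k)) n y)"
  by (induction n arbitrary: y) auto

lemma orbit_shift:
  "orbit (\<lambda>k. a (Suc k)) (orbit a x0 1) k = orbit a x0 (Suc k)"
  by (induction k) auto

lemma prod_lt1:
  fixes n :: nat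
  assumes "\<forall>i. norm (f i :: complex) < 1"
  shows "(\<Prod>i=0..n. norm (f i)) < 1"
proof (induction n)
  case 0 then show ?case using assms by simp
next
  case (Suc n)
  have "(\<Prod>i=0..Suc n. norm (f i)) = (\<Prod>i=0..n. norm (f i)) * norm (f (Suc n))" by simp
  also have "\<dots> \<le> (\<Prod>i=0..n. norm (f i))"
    using assms by (intro mult_right_le_one_le) (auto simp: prod_nonneg less_imp_le)
  also have "\<dots> < 1" using Suc .
  finally show ?case .
qed

lemma main:
  assumes ring: "complex_subring Z" and disc: "discrete Z"
  shows "\<forall>a x0. (\<forall>n\<ge>1. a n \<in> Z) \<longrightarrow> (\<forall>n. orbit a x0 n \<noteq> 0) \<longrightarrow> (\<forall>n. norm (orbit a x0 n) < 1) \<longrightarrow>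
     (\<exists>p\<in>Z. \<exists>q\<in>Z. q \<noteq> 0 \<and> Tinv_comp a n 0 = p / q \<and>
        norm (q * x0 - p) = (\<Prod>i=0..n. norm (orbit a x0 i)))"
proof (induction n)
  case 0
  have "(0::complex) \<in> Z" "(1::complex) \<in> Z" using ring by (auto simp: complex_subring_def)
  then show ?case
    by (intro allI impI bexI[where x=0] bexI[where x=1]) auto
next
  case (Suc n)
  show ?case
  proof (intro allI impI)
    fix a x0
    assume aZ: "\<forall>n\<ge>1. a n \<in> Z" and def: "\<forall>n. orbit a x0 n \<noteq> 0" and sm: "\<forall>n. norm (orbit a x0 n) < 1"
    define b where "b = (\<lambda>k. a (Suc k))"
    define x1 where "x1 = orbit a x0 1"
    have ob: "orbit b x1 k = orbit a x0 (Suc k)" for k unfolding b_def x1_def by (rule orbit_shift)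
    have bZ: "\<forall>n\<ge>1. b n \<in> Z" using aZ by (simp add: b_def)
    have d1: "\<forall>n. orbit b x1 n \<noteq> 0" using def by (metis ob)
    have s1: "\<forall>n. norm (orbit b x1 n) < 1" using sm by (metis ob)
    have ex: "\<exists>p\<in>Z. \<exists>q\<in>Z. q \<noteq> 0 \<and> Tinv_comp b n 0 = p / q \<and>
        norm (q * x1 - p) = (\<Prod>i=0..n. norm (orbit b x1 i))"
      using Suc.IH bZ d1 s1 by blast
    obtain p' q' where p': "p' \<in> Z" and q': "q' \<in> Z" "q' \<noteq> 0" and tc: "Tinv_comp b n 0 = p' / q'"
      and nm: "norm (q' * x1 - p') = (\<Prod>i=0..n. norm (orbit b x1 i))"
      using ex by blast
    have a1: "a 1 \<in> Z" using aZ by simp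
    define p where "p = q'"
    define q where "q = p' + a 1 * q'"
    have pZ: "p \<in> Z" using q' by (simp add: p_def)
    have qZ: "q \<in> Z" using ring p' q' a1 by (simp add: q_def complex_subring_def)
    have x0nz: "x0 \<noteq> 0" using def[rule_format, of 0] by simp
    have x1eq: "x1 = inverse x0 - a 1" by (simp add: x1_def T_def)
    have key: "q * x0 - p = x0 * (p' - q' * x1)"
      using x0nz by (simp add: q_def p_def x1eq field_simps)
    have prodeq: "(\<Prod>i=0..Suc n. norm (orbit a x0 i)) = norm x0 * (\<Prod>i=0..n. norm (orbit b x1 i))"
      by (simp add: ob prod.atLeast0_atMost_Suc_shift del: prod.cl_ivl_Suc)
    have nm2: "norm (q * x0 - p) = (\<Prod>i=0..Suc n. norm (orbit a x0 i))"
      unfolding key prodeq nm[symmetric] norm_mult by (simp add: norm_minus_commute)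
    have lt1: "(\<Prod>i=0..Suc n. norm (orbit a x0 i)) < 1" by (rule prod_lt1) (rule sm)
    have qnz: "q \<noteq> 0"
    proof
      assume "q = 0"
      hence "norm p < 1" using nm2 lt1 by simp
      moreover have "norm p \<ge> 1" using Z_norm[OF ring disc pZ] q' by (simp add: p_def)
      ultimately show False by simp
    qed
    have "Tinv_comp a (Suc n) 0 = inverse (p' / q' + a 1)"
      unfolding Tinv_comp_front tc[unfolded b_def] Tinv_def by simp
    also have "\<dots> = p / q" using q' qnz
      by (simp add: p_def q_def field_simps)
    finally show "\<exists>p\<in>Z. \<exists>q\<in>Z. q \<noteq> 0 \<and> Tinv_comp a (Suc n) 0 = p / q \<and>
        norm (q * x0 - p) = (\<Prod>i=0..Suc n. norm (orbit a x0 i))"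
      using pZ qZ qnz nm2 by blast
  qed
qed

theorem lemma2p1:
  fixes K Z :: "complex set" and a :: "nat \<Rightarrow> complex" and x0 :: complex
  assumes field: "K = \<real> \<or> K = UNIV"
    and Zsub: "Z \<subseteq> K"
    and ring: "complex_subring Z"
    and disc: "discrete Z"
    and conj: "\<forall>z\<in>Z. cnj z \<in> Z"
    and aZ: "\<forall>n\<ge>1. a n \<in> Z"
    and x0K: "x0 \<in> K"
    and defined: "\<forall>n. orbit a x0 n \<noteq> 0"
    and small: "\<forall>n. norm (orbit a x0 n) < 1"
  shows "\<forall>n. \<exists>p\<in>Z. \<exists>q\<in>Z. norm q \<ge> 1 \<and> p / q = Tinv_comp a n 0 \<and>
           norm (Tinv_comp a n 0 - x0) = (1 / norm q) * (\<Prod>i=0..n. norm (orbit a x0 i))"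
proof
  fix n
  obtain p q where pq: "p \<in> Z" "q \<in> Z" "q \<noteq> 0" "Tinv_comp a n 0 = p / q"
    "norm (q * x0 - p) = (\<Prod>i=0..n. norm (orbit a x0 i))"
    using main[OF ring disc] aZ defined small by metis
  have "Tinv_comp a n 0 - x0 = - (q * x0 - p) / q" using pq(3,4) by (simp add: field_simps)
  hence "norm (Tinv_comp a n 0 - x0) = (1 / norm q) * (\<Prod>i=0..n. norm (orbit a x0 i))"
    using pq(5) by (simp add: norm_divide norm_minus_commute)
  moreover have "norm q \<ge> 1" using Z_norm[OF ring disc pq(2,3)] .
  ultimately show "\<exists>p\<in>Z. \<exists>q\<in>Z. norm q \<ge> 1 \<and> p / q = Tinv_comp a n 0 \<and>
           norm (Tinv_comp a n 0 - x0) = (1 / norm q) * (\<Prod>i=0..n. norm (orbit a x0 i))"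
    using pq by metis
qed

end
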